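(* For all integers $n\geq 1$ and $j\geq 0$, $$FO_{j,2}(n)=FD_{j,2}(n).$$
   Context: A partition is a finite nonincreasing sequence of positive integers (its parts); its size is the sum of its parts and is not fixed here. For a partition $\pi$, let $\alpha(\pi)$ be its largest part and $\lambda(\pi)$ its number of parts; the perimeter of $\pi$ is $\alpha(\pi)+\lambda(\pi)-1$ (the largest hook length of its Ferrers diagram). For a condition $*$, $r(n\mid * )$ denotes the number of partitions (of any size) with perimeter $n$ satisfying $*$. Define $FO_{j,2}(n)$ to be the number of partitions of perimeter $n$ having exactly $j$ distinct part sizes that are even (each such part may repeat), and $FD_{j,2}(n)$ to be the number of partitions of perimeter $n$ having exactly $j$ distinct part sizes that each appear at least $2$ times. *)

theory Defs
  imports Main
begin

definition is_partition :: "nat list \<Rightarrow> bool" where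
  "is_partition p \<longleftrightarrow> sorted_wrt (\<ge>) p \<and> (\<forall>x\<in>set p. 0 < x)"

definition perimeter :: "nat list \<Rightarrow> nat" where
  "perimeter p = Max (set p) + length p - 1"

definition partitions_perim :: "nat \<Rightarrow> nat list set" where
  "partitions_perim n = {p. is_partition p \<and> p \<noteq> [] \<and> perimeter p = n}"

definition FO2 :: "nat \<Rightarrow> nat \<Rightarrow> nat" where
  "FO2 j n = card {p \<in> partitions_perim n. card {x \<in> set p. even x} = j}"

definition FD2 :: "nat \<Rightarrow> nat \<Rightarrow> nat" where
  "FD2 j n = card {p \<in> partitions_perim n. card {x \<in> set p. 2 \<le> count_list p x} = j}"

end

theory Submission
  imports Defs
begin

fun enc :: "nat \<Rightarrow> bool list \<Rightarrow> nat list" where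
  "enc k [] = [k]"
| "enc k (True#w) = enc (k+1) w"
| "enc k (False#w) = k # enc k w"

fun fop :: "bool \<Rightarrow> bool \<Rightarrow> bool list \<Rightarrow> nat" where
  "fop e b [] = (if b \<and> e then 1 else 0)"
| "fop e b (x#w) = (if b \<and> e \<and> \<not>x then 1 else 0) + fop (if x then \<not>e else e) x w"

fun fdq :: "bool \<Rightarrow> bool \<Rightarrow> bool list \<Rightarrow> nat" where
  "fdq p c [] = (if p \<and> \<not>c then 1 else 0)"
| "fdq p c (x#v) = (if p \<and> \<not>c \<and> \<not>x then 1 else 0) + fdq c x v"

fun dif :: "bool \<Rightarrow> bool list \<Rightarrow> bool list" where
  "dif b [] = []"
| "dif b (x#xs) = (b \<noteq> x) # dif x xs"

fun und :: "bool \<Rightarrow> bool list \<Rightarrow> bool list" where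
  "und b [] = []"
| "und b (y#ys) = (b \<noteq> y) # und (b \<noteq> y) ys"

lemma bxx: "(b = (b = a)) = (a::bool)" by auto

lemma und_dif: "und b (dif b xs) = xs"
  by (induction xs arbitrary: b) (simp_all add: bxx)

lemma dif_und: "dif b (und b xs) = xs"
  by (induction xs arbitrary: b) auto

lemma len_dif[simp]: "length (dif b xs) = length xs"
  by (induction xs arbitrary: b) auto

lemma fop_dif: "e = (\<not>c) \<Longrightarrow> b = (p \<noteq> c) \<Longrightarrow> fop e b (dif c v) = fdq p c v"
proof (induction v arbitrary: p c e b)
  case Nil then show ?case by auto
next
  case (Cons x v)
  have h: "fop (if c \<noteq> x then \<not>e else e) (c \<noteq> x) (dif x v) = fdq c x v"
    using Cons by (intro Cons.IH) auto
  show ?case using Cons.prems h by (cases c; cases x; cases p) simp_all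
qed

lemma enc_ge: "x \<in> set (enc k w) \<Longrightarrow> k \<le> x"
  by (induction k w rule: enc.induct) (auto dest: Suc_leD)

lemma enc_ne[simp]: "enc k w \<noteq> []"
  by (induction k w rule: enc.induct) auto

lemma enc_sorted: "sorted (enc k w)"
  by (induction k w rule: enc.induct) (auto dest: enc_ge)

lemma enc_len: "length (enc k w) = 1 + count_list w False"
  by (induction k w rule: enc.induct) auto

lemma enc_max_mem: "k + count_list w True \<in> set (enc k w)"
  by (induction k w rule: enc.induct) auto

lemma enc_le: "x \<in> set (enc k w) \<Longrightarrow> x \<le> k + count_list w True"
  by (induction k w rule: enc.induct) auto

lemma enc_Max: "Max (set (enc k w)) = k + count_list w True"
  by (rule Max_eqI) (auto simp: enc_max_mem enc_le)

lemma count_TF: "count_list w True + count_list w False = length w"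
  by (induction w) auto

lemma enc_hd_T: "k \<notin> set (enc (Suc k) w)"
  using enc_ge[of k "Suc k" w] by auto

lemma enc_inj: "enc k v = enc k w \<Longrightarrow> v = w"
proof (induction v arbitrary: k w)
  case Nil
  show ?case
  proof (cases w)
    case Nil then show ?thesis by simp
  next
    case (Cons x w')
    show ?thesis
    proof (cases x)
      case True
      have "[k] = enc (Suc k) w'" using Nil.prems Cons True by simp
      then have "k \<in> set (enc (Suc k) w')" by (metis list.set_intros(1))
      then show ?thesis using enc_hd_T by blast
    next
      case False
      have "[k] = k # enc k w'" using Nil.prems Cons False by simp
      then show ?thesis by (metis enc_ne list.inject)
    qed
  qed
next
  case (Cons y v)
  show ?case
  proof (cases w)
    case Nil
    show ?thesis
    proof (cases y)
      case True
      have "enc (Suc k) v = [k]" using Cons.prems Nil True by simp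
      then have "k \<in> set (enc (Suc k) v)" by (metis list.set_intros(1))
      then show ?thesis using enc_hd_T by blast
    next
      case False
      have "k # enc k v = [k]" using Cons.prems Nil False by simp
      then show ?thesis by (metis enc_ne list.inject)
    qed
  next
    case (Cons x w')
    note eq = \<open>enc k (y # v) = enc k w\<close>
    show ?thesis
    proof (cases y; cases x)
      assume "y" "x"
      then have "enc (Suc k) v = enc (Suc k) w'" using eq Cons by simp
      then show ?thesis using Cons.IH \<open>y\<close> \<open>x\<close> Cons by blast
    next
      assume "y" "\<not>x"
      then have "enc (Suc k) v = k # enc k w'" using eq Cons by simp
      then have "k \<in> set (enc (Suc k) v)" by (metis list.set_intros(1))
      then show ?thesis using enc_hd_T by blast
    next
      assume "\<not>y" "x"
      then have "k # enc k v = enc (Suc k) w'" using eq Cons by simp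
      then have "k \<in> set (enc (Suc k) w')" by (metis list.set_intros(1))
      then show ?thesis using enc_hd_T by blast
    next
      assume "\<not>y" "\<not>x"
      then have "enc k v = enc k w'" using eq Cons by simp
      then show ?thesis using Cons.IH \<open>\<not>y\<close> \<open>\<not>x\<close> Cons by blast
    qed
  qed
qed

lemma enc_surj: "sorted q \<Longrightarrow> q \<noteq> [] \<Longrightarrow> \<forall>x\<in>set q. k \<le> x \<Longrightarrow> \<exists>w. enc k w = q"
proof (induction q arbitrary: k)
  case Nil then show ?case by simp
next
  case (Cons x q)
  have "\<forall>k. x - k = m \<longrightarrow> k \<le> x \<longrightarrow> (\<exists>w. enc k w = x # q)" for m
  proof (induction m)
    case 0
    show ?case
    proof (intro allI impI)
      fix k assume "x - k = 0" "k \<le> x"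
      then have xk: "x = k" by simp
      show "\<exists>w. enc k w = x # q"
      proof (cases q)
        case Nil then show ?thesis using xk by (intro exI[of _ "[]"]) simp
      next
        case (Cons a r)
        then obtain w where "enc k w = q" using Cons.IH[of k] Cons.prems xk by auto
        then show ?thesis using xk by (intro exI[of _ "False#w"]) simp
      qed
    qed
  next
    case (Suc m)
    show ?case
    proof (intro allI impI)
      fix k assume a: "x - k = Suc m" "k \<le> x"
      have "x - (k+1) = m" "k+1 \<le> x" using a by auto
      then obtain w where "enc (k+1) w = x # q" using Suc.IH by blast
      then show "\<exists>w. enc k w = x # q" by (intro exI[of _ "True#w"]) simp
    qed
  qed
  moreover have "k \<le> x" using Cons.prems by simp
  ultimately show ?case by blast
qed


lemma len_und[simp]: "length (und b xs) = length xs"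
  by (induction xs arbitrary: b) auto

lemma fo_enc: "card {x \<in> set (enc k w) - {k}. even x} = fop (even k) False w
   \<and> card {x \<in> set (enc k w). even x} = fop (even k) True w"
proof (induction w arbitrary: k)
  case Nil
  have "{x \<in> set (enc k []). even x} = (if even k then {k} else {})" by auto
  then show ?case by auto
next
  case (Cons a w)
  show ?case
  proof (cases a)
    case True
    have nk: "k \<notin> set (enc (k+1) w)" using enc_ge[of k "k+1" w] by auto
    have e: "set (enc (k+1) w) - {k} = set (enc (k+1) w)" using nk by auto
    show ?thesis using Cons.IH[of "k+1"] True e by simp
  next
    case False
    let ?S = "set (enc k w)"
    have e1: "{x \<in> set (k # enc k w) - {k}. even x} = {x \<in> ?S - {k}. even x}" by auto
    have e2: "{x \<in> set (k # enc k w). even x} = (if even k then insert k {x \<in> ?S - {k}. even x} else {x \<in> ?S - {k}. even x})" by auto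
    show ?thesis using Cons.IH[of k] False e1 e2 by simp
  qed
qed

lemma fd_enc: "card {x \<in> set (enc k w). 2 \<le> count_list (enc k w) x} = fdq p True w
  \<and> card {x \<in> set (k # enc k w). 2 \<le> count_list (k # enc k w) x} = fdq True False w
  \<and> card {x \<in> set (enc k w) - {k}. 2 \<le> count_list (enc k w) x} = fdq False False w"
proof (induction w arbitrary: k p)
  case Nil
  have "{x \<in> set [k, k]. 2 \<le> count_list [k, k] x} = {k}" by auto
  then show ?case by auto
next
  case (Cons a w)
  show ?case
  proof (cases a)
    case True
    let ?E = "enc (k+1) w"
    have nk: "k \<notin> set ?E" using enc_ge[of k "k+1" w] by auto
    have e1: "{x \<in> set (k # ?E). 2 \<le> count_list (k # ?E) x} = {x \<in> set ?E. 2 \<le> count_list ?E x}"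
      using nk by auto
    have e2: "set ?E - {k} = set ?E" using nk by auto
    show ?thesis using Cons.IH[of "k+1"] True e1 e2 by simp
  next
    case False
    let ?E = "enc k w"
    have e1: "{x \<in> set (k # k # ?E). 2 \<le> count_list (k # k # ?E) x}
       = insert k {x \<in> set ?E - {k}. 2 \<le> count_list ?E x}" by auto
    have e2: "{x \<in> set (k # ?E) - {k}. 2 \<le> count_list (k # ?E) x} = {x \<in> set ?E - {k}. 2 \<le> count_list ?E x}"
      by auto
    show ?thesis using Cons.IH[of k] False e1 e2 by simp
  qed
qed

lemma perim_enc: "perimeter (rev (enc 1 w)) = 1 + length w"
  unfolding perimeter_def using enc_Max[of 1 w] enc_len[of 1 w] count_TF[of w] by simp

lemma partitions_enc:
  assumes "n \<ge> 1"
  shows "partitions_perim n = (\<lambda>w. rev (enc 1 w)) ` {w. length w = n - 1}"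
proof
  show "(\<lambda>w. rev (enc 1 w)) ` {w. length w = n - 1} \<subseteq> partitions_perim n"
  proof
    fix p assume "p \<in> (\<lambda>w. rev (enc 1 w)) ` {w. length w = n - 1}"
    then obtain w where w: "length w = n - 1" "p = rev (enc 1 w)" by auto
    have "is_partition p" unfolding is_partition_def w(2) sorted_wrt_rev
      using enc_sorted[of 1 w] enc_ge[of _ 1 w] by (auto simp: sorted_wrt_iff_nth_less Suc_le_eq)
    moreover have "perimeter p = n" using perim_enc w assms by simp
    ultimately show "p \<in> partitions_perim n" unfolding partitions_perim_def using w by simp
  qed
next
  show "partitions_perim n \<subseteq> (\<lambda>w. rev (enc 1 w)) ` {w. length w = n - 1}"
  proof
    fix p assume "p \<in> partitions_perim n"
    then have p: "is_partition p" "p \<noteq> []" "perimeter p = n" unfolding partitions_perim_def by auto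
    have "sorted (rev p)" using p(1) unfolding is_partition_def sorted_wrt_rev
      by (simp add: sorted_wrt_iff_nth_less)
    moreover have "\<forall>x\<in>set (rev p). 1 \<le> x" using p(1) unfolding is_partition_def by auto
    ultimately obtain w where w: "enc 1 w = rev p" using enc_surj[of "rev p" 1] p(2) by auto
    then have pw: "p = rev (enc 1 w)" by simp
    then have "length w = n - 1" using perim_enc[of w] p(3) by simp
    then show "p \<in> (\<lambda>w. rev (enc 1 w)) ` {w. length w = n - 1}" using pw by auto
  qed
qed

lemma inj_enc: "inj_on (\<lambda>w. rev (enc 1 w)) A"
  by (rule inj_onI) (metis enc_inj rev_rev_ident)

lemma card_filter_enc:
  assumes "n \<ge> 1"
  shows "card {p \<in> partitions_perim n. P p} = card {w. length w = n - 1 \<and> P (rev (enc 1 w))}"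
proof -
  have "{p \<in> partitions_perim n. P p} = (\<lambda>w. rev (enc 1 w)) ` {w. length w = n - 1 \<and> P (rev (enc 1 w))}"
    using partitions_enc[OF assms] by auto
  then show ?thesis using card_image[OF inj_enc] by simp
qed

theorem theorem1p1:
  fixes n j :: nat
  assumes "n \<ge> 1"
  shows "FO2 j n = FD2 j n"
proof -
  have fo: "FO2 j n = card {w. length w = n - 1 \<and> fop False True w = j}"
    unfolding FO2_def card_filter_enc[OF assms] using fo_enc[of 1] by simp
  have fd: "FD2 j n = card {w. length w = n - 1 \<and> fdq False True w = j}"
    unfolding FD2_def card_filter_enc[OF assms] using fd_enc[of 1 _ False] by simp
  have img: "dif True ` {w. length w = n - 1 \<and> fdq False True w = j}
      = {w. length w = n - 1 \<and> fop False True w = j}"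
  proof
    show "dif True ` {w. length w = n - 1 \<and> fdq False True w = j}
      \<subseteq> {w. length w = n - 1 \<and> fop False True w = j}"
      using fop_dif[of False True True False] by auto
  next
    show "{w. length w = n - 1 \<and> fop False True w = j}
      \<subseteq> dif True ` {w. length w = n - 1 \<and> fdq False True w = j}"
    proof
      fix w assume w: "w \<in> {w. length w = n - 1 \<and> fop False True w = j}"
      have "fdq False True (und True w) = fop False True (dif True (und True w))"
        using fop_dif[of False True True False] by simp
      then have "und True w \<in> {w. length w = n - 1 \<and> fdq False True w = j}"
        using w by (simp add: dif_und)
      moreover have "w = dif True (und True w)" by (simp add: dif_und)
      ultimately show "w \<in> dif True ` {w. length w = n - 1 \<and> fdq False True w = j}" by blast
    qed
  qed
  have inj: "inj_on (dif True) A" for A by (rule inj_onI) (metis und_dif)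
  have "card (dif True ` {w. length w = n - 1 \<and> fdq False True w = j})
     = card {w. length w = n - 1 \<and> fdq False True w = j}" by (rule card_image[OF inj])
  then show ?thesis unfolding fo fd img by simp
qed

end
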